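(* Let $n$ be odd, let $p'$ be a prime divisor of $n$, and let $A=L(n;p')$. Let $p$ be a prime divisor of $n$ which is coprime with $n'=n/p$. Then $S(n')\subseteq f(A)$, where $f:\mathbb{Z}_n\to\mathbb{Z}_{n'}$ is the natural map.
   Context: $U(m)$ is the unit group of $\mathbb{Z}_m$. For odd $m=\prod p_i^{r_i}$, a prime $p\mid m$ and $a\in U(m)$, $\left(\frac{a}{p}\right)$ is the Legendre symbol of the image of $a$ in $\mathbb{Z}_p$ and $\left(\frac{a}{m}\right)=\prod\left(\frac{a}{p_i}\right)^{r_i}$ is the Jacobi symbol; $S(m)$ is the kernel of $a\mapsto\left(\frac{a}{m}\right)$ on $U(m)$, and for a prime $p'\mid m$, $L(m;p')=\{a\in U(m):\left(\frac{a}{m}\right)=\left(\frac{a}{p'}\right)\}$. The natural map $\mathbb{Z}_n\to\mathbb{Z}_{n'}$ is $a+n\mathbb{Z}\mapsto a+n'\mathbb{Z}$. *)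

theory Defs
  imports "HOL-Number_Theory.Number_Theory"
begin

text \<open>Elements of Z_m are represented by their canonical representatives 0..m-1.\<close>

definition units_mod :: "nat \<Rightarrow> int set" where
  "units_mod m = {a. 0 \<le> a \<and> a < int m \<and> coprime a (int m)}"

definition jacobi :: "int \<Rightarrow> nat \<Rightarrow> int" where
  "jacobi a m = (\<Prod>p\<in>prime_factors m. Legendre a (int p) ^ multiplicity p m)"

definition S_set :: "nat \<Rightarrow> int set" where
  "S_set m = {a \<in> units_mod m. jacobi a m = 1}"

definition L_set :: "nat \<Rightarrow> nat \<Rightarrow> int set" where
  "L_set m p' = {a \<in> units_mod m. jacobi a m = Legendre a (int p')}"

definition nat_map :: "nat \<Rightarrow> int \<Rightarrow> int" where
  "nat_map n' a = a mod int n'"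

end

theory Submission
  imports Defs "HOL-Number_Theory.Residue_Primitive_Roots"
begin

lemma nonres_exists:
  fixes p :: nat
  assumes "prime p" "odd p"
  shows "\<exists>c::int. Legendre c (int p) = -1"
proof -
  have p2: "p > 2" using assms prime_ge_2_nat[of p] by (cases "p = 2") auto
  obtain g where g: "residue_primroot p g" using prime_primitive_root_exists[of p] assms(1) prime_gt_1_nat by blast
  have ordg: "ord p g = p - 1" using g assms(1) by (simp add: residue_primroot_def totient_prime)
  have cop: "coprime p g" using g by (simp add: residue_primroot_def)
  have "Legendre (int g) (int p) = -1"
  proof (rule ccontr)
    assume ne: "Legendre (int g) (int p) \<noteq> -1"
    have "\<not> [int g = 0] (mod int p)"
    proof
      assume "[int g = 0] (mod int p)"
      then have "p dvd g" by (metis cong_0_iff int_dvd_int_iff of_nat_0 cong_int_iff)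
      with cop assms(1) show False
        by (metis coprime_absorb_left coprime_commute not_prime_unit)
    qed
    with ne have L1: "Legendre (int g) (int p) = 1" by (auto simp: Legendre_def split: if_splits)
    have "[Legendre (int g) (int p) = int g ^ ((p - 1) div 2)] (mod int p)"
      using euler_criterion[OF assms(1) p2] by simp
    with L1 have "[int (g ^ ((p - 1) div 2)) = int 1] (mod int p)"
      by (simp add: cong_sym)
    then have "[g ^ ((p - 1) div 2) = 1] (mod p)" using cong_int_iff by blast
    then have "ord p g dvd (p - 1) div 2" using ord_divides by blast
    moreover have "(p - 1) div 2 > 0" using p2 by simp
    ultimately have "p - 1 \<le> (p - 1) div 2" using ordg by (metis dvd_imp_le)
    with p2 show False by simp
  qed
  then show ?thesis by blast
qed

lemma Legendre_cong':
  assumes "[a = b] (mod q)"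
  shows "Legendre a q = Legendre b q"
proof -
  have "[a = 0] (mod q) \<longleftrightarrow> [b = 0] (mod q)"
    using assms by (meson cong_sym cong_trans)
  moreover have "QuadRes q a \<longleftrightarrow> QuadRes q b"
    using assms unfolding QuadRes_def by (meson cong_sym cong_trans)
  ultimately show ?thesis by (simp add: Legendre_def)
qed

lemma jacobi_cong:
  assumes "[a = b] (mod int m)"
  shows "jacobi a m = jacobi b m"
  unfolding jacobi_def
proof (rule prod.cong[OF refl])
  fix q assume "q \<in> prime_factors m"
  then have "q dvd m" by auto
  then have "[a = b] (mod int q)" using assms cong_dvd_modulus int_dvd_int_iff by blast
  then show "Legendre a (int q) ^ multiplicity q m = Legendre b (int q) ^ multiplicity q m"
    using Legendre_cong' by metis
qed

lemma jacobi_split: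
  fixes p m :: nat
  assumes "prime p" "coprime p m" "m > 0"
  shows "jacobi a (p * m) = Legendre a (int p) * jacobi a m"
proof -
  have nd: "\<not> p dvd m" using assms
    by (metis coprime_absorb_left not_prime_unit)
  have pf: "prime_factors (p * m) = insert p (prime_factors m)"
    using assms prime_factors_product[of p m] by (auto simp: prime_prime_factors)
  have pn: "p \<notin> prime_factors m" using nd by auto
  have mp: "multiplicity p (p * m) = 1"
    using assms nd prime_elem_multiplicity_mult_distrib[of p p m]
    by (simp add: multiplicity_self not_dvd_imp_multiplicity_0 prime_gt_0_nat)
  have mq: "multiplicity q (p * m) = multiplicity q m" if "q \<in> prime_factors m" for q
  proof -
    have "q \<noteq> p" using that pn by auto
    moreover have "prime q" using that by auto
    ultimately show ?thesis
      using assms prime_elem_multiplicity_mult_distrib[of q p m] prime_multiplicity_other[of q p]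
      by (simp add: prime_gt_0_nat)
  qed
  have "jacobi a (p * m) = Legendre a (int p) ^ multiplicity p (p * m) *
      (\<Prod>q\<in>prime_factors m. Legendre a (int q) ^ multiplicity q (p * m))"
    unfolding jacobi_def pf using pn by (simp add: prod.insert)
  also have "\<dots> = Legendre a (int p) * jacobi a m"
    unfolding jacobi_def mp using mq by simp
  finally show ?thesis .
qed

theorem lemma3p3:
  fixes n p p' :: nat
  assumes "odd n"
    and "prime p'" and "p' dvd n"
    and "prime p" and "p dvd n" and "coprime p (n div p)"
  shows "S_set (n div p) \<subseteq> nat_map (n div p) ` L_set n p'"
proof
  fix b assume bS: "b \<in> S_set (n div p)"
  define m where "m = n div p"
  have n0: "n > 0" using assms(1) by (cases n) auto
  have nm: "n = p * m" unfolding m_def using assms(5) by simp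
  have m0: "m > 0" using n0 nm by (cases m) auto
  have copm: "coprime p m" using assms(6) m_def by simp
  have oddp: "odd p" using assms(1) assms(5) by (meson dvd_trans)
  from bS have b0: "0 \<le> b" and bm: "b < int m" and cb: "coprime b (int m)" and jb: "jacobi b m = 1"
    unfolding S_set_def units_mod_def m_def by auto
  define \<epsilon> where "\<epsilon> = (if p' = p then 1 else Legendre b (int p'))"
  have pm': "p' \<noteq> p \<Longrightarrow> p' dvd m"
  proof -
    assume ne: "p' \<noteq> p"
    have "p' dvd p \<or> p' dvd m" using assms(2,3) nm prime_dvd_mult_iff by metis
    moreover have "\<not> p' dvd p" using ne assms(2,4) primes_dvd_imp_eq by blast
    ultimately show "p' dvd m" by blast
  qed
  have eps: "\<epsilon> = 1 \<or> \<epsilon> = -1"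
  proof (cases "p' = p")
    case False
    then have "p' dvd m" using pm' by blast
    then have d1: "int p' dvd int m" by simp
    have "\<not> [b = 0] (mod int p')"
    proof
      assume "[b = 0] (mod int p')"
      then have "int p' dvd b" by (simp add: cong_0_iff)
      then have "is_unit (int p')" using coprime_common_divisor[OF cb _ d1] by blast
      then show False using assms(2) by simp
    qed
    then show ?thesis unfolding \<epsilon>_def Legendre_def by auto
  qed (simp add: \<epsilon>_def)
  obtain c where c: "Legendre c (int p) = \<epsilon>"
  proof (cases "\<epsilon> = 1")
    case True
    have "Legendre 1 (int p) = 1"
      using assms(4) prime_gt_1_nat[OF assms(4)]
      unfolding Legendre_def QuadRes_def
      by (auto simp: cong_def intro: exI[of _ 1])
    then show ?thesis using that True by blast
  next
    case False
    then have "\<epsilon> = -1" using eps by blast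
    then show ?thesis using that nonres_exists[OF assms(4) oddp] by blast
  qed
  have copi: "coprime (int m) (int p)" using copm by (simp add: coprime_commute)
  obtain x where x: "[x = b] (mod int m)" "[x = c] (mod int p)"
    using binary_chinese_remainder_int[OF copi] by blast
  define a where "a = x mod int n"
  have ax: "[a = x] (mod int n)" by (simp add: a_def cong_def)
  have dm: "int m dvd int n" using nm by simp
  have dp: "int p dvd int n" using nm by simp
  have am: "[a = b] (mod int m)" using cong_trans[OF cong_dvd_modulus[OF ax dm] x(1)] .
  have ap: "[a = c] (mod int p)" using cong_trans[OF cong_dvd_modulus[OF ax dp] x(2)] .
  have La: "Legendre a (int p) = \<epsilon>" using Legendre_cong'[OF ap] c by simp
  have ja: "jacobi a n = \<epsilon>"
    using jacobi_split[OF assms(4) copm m0, of a] nm La jacobi_cong[OF am] jb by simp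
  have cam: "coprime a (int m)" using cong_imp_coprime[OF cong_sym[OF am] cb] .
  have cap: "coprime a (int p)"
  proof -
    have "\<not> [a = 0] (mod int p)" using La eps unfolding Legendre_def by (auto split: if_splits)
    then have "\<not> int p dvd a" by (simp add: cong_0_iff)
    moreover have "prime (int p)" using assms(4) by simp
    ultimately show ?thesis using prime_imp_coprime_int coprime_commute by blast
  qed
  have can: "coprime a (int n)" using cam cap nm by (simp add: coprime_commute)
  have a0: "0 \<le> a" "a < int n" unfolding a_def using n0 by auto
  have "a \<in> L_set n p'"
  proof -
    have "jacobi a n = Legendre a (int p')"
    proof (cases "p' = p")
      case True then show ?thesis using ja La by simp
    next
      case False
      then have "[a = b] (mod int p')" using am pm' cong_dvd_modulus int_dvd_int_iff by blast
      then have "Legendre a (int p') = Legendre b (int p')" by (rule Legendre_cong')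
      then show ?thesis using ja False unfolding \<epsilon>_def by simp
    qed
    then show ?thesis unfolding L_set_def units_mod_def using a0 can by auto
  qed
  moreover have "nat_map (n div p) a = b"
  proof -
    have "a mod int m = b mod int m" using am by (simp add: cong_def)
    also have "\<dots> = b" using b0 bm by simp
    finally show ?thesis unfolding nat_map_def m_def by simp
  qed
  ultimately show "b \<in> nat_map (n div p) ` L_set n p'" by (metis rev_image_eqI)
qed

end
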